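(* For every $x\in\mathbb{R}^n$, $$\|Px\|_q^2\le\|x\|_q^2-\tfrac12D,\qquad\text{where }D=\sum_{i=1}^n\max_{j:\,m_{ij}>0}(x_i-x_j)^2.$$
   Context: Let $M=(m_{ij})$ be a symmetric $n\times n$ nonnegative matrix whose nonzero entries are all at least $1$ and whose diagonal entries are positive. Let $q=M\mathbf 1$ and $P=\mathrm{diag}(q)^{-1}M$. Define $\langle x,y\rangle_q=\sum_iq_ix_iy_i$ and $\|x\|_q^2=\langle x,x\rangle_q$. *)

theory Defs
  imports "HOL-Analysis.Analysis"
begin

definition degvec :: "real^'n^'n \<Rightarrow> real^'n" where
  "degvec M = M *v (\<chi> i. 1)"

definition transmat :: "real^'n^'n \<Rightarrow> real^'n^'n" where
  "transmat M = (\<chi> i j. M $ i $ j / degvec M $ i)"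

definition qinner :: "real^'n \<Rightarrow> real^'n \<Rightarrow> real^'n \<Rightarrow> real" where
  "qinner q x y = (\<Sum>i\<in>UNIV. q $ i * x $ i * y $ i)"

definition qnorm2 :: "real^'n \<Rightarrow> real^'n \<Rightarrow> real" where
  "qnorm2 q x = qinner q x x"

end

theory Submission
  imports Defs
begin

theorem lemma5:
  fixes M :: "real^'n^'n" and x :: "real^'n"
  assumes sym: "transpose M = M"
    and nonneg: "\<And>i j. M $ i $ j \<ge> 0"
    and ge1: "\<And>i j. M $ i $ j \<noteq> 0 \<Longrightarrow> M $ i $ j \<ge> 1"
    and diag: "\<And>i. M $ i $ i > 0"
  shows "qnorm2 (degvec M) (transmat M *v x)
         \<le> qnorm2 (degvec M) x
           - 1/2 * (\<Sum>i\<in>UNIV. Max {(x $ i - x $ j)^2 | j. M $ i $ j > 0})"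
proof -
  define q where "q i = (\<Sum>j\<in>UNIV. M $ i $ j)" for i
  have qd: "degvec M $ i = q i" for i
    by (simp add: degvec_def q_def matrix_vector_mult_def)
  have qpos: "q i > 0" for i
  proof -
    have "M $ i $ i \<le> q i" unfolding q_def
      by (rule member_le_sum) (auto intro: nonneg)
    with diag[of i] show ?thesis by linarith
  qed
  define y where "y i = (\<Sum>j\<in>UNIV. M $ i $ j * x $ j) / q i" for i
  have Pd: "(transmat M *v x) $ i = y i" for i
    by (simp add: transmat_def matrix_vector_mult_def y_def qd sum_divide_distrib)
  have symm: "M $ i $ j = M $ j $ i" for i j
    proof - have "transpose M $ i $ j = M $ i $ j" using sym by simp then show ?thesis by (simp add: transpose_def) qed
  define V where "V i = (\<Sum>j\<in>UNIV. M $ i $ j * (x $ j - y i)^2)" for i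
  have Vi: "V i = (\<Sum>j\<in>UNIV. M $ i $ j * (x $ j)^2) - q i * (y i)^2" for i
  proof -
    have s: "(\<Sum>j\<in>UNIV. M $ i $ j * x $ j) = q i * y i"
      using qpos[of i] by (simp add: y_def)
    have "V i = (\<Sum>j\<in>UNIV. M $ i $ j * (x $ j)^2) - 2 * y i * (\<Sum>j\<in>UNIV. M $ i $ j * x $ j)
               + (y i)^2 * q i"
      unfolding V_def q_def
      by (simp add: power2_eq_square algebra_simps sum.distrib sum_subtractf sum_distrib_left sum_distrib_right)
    then show ?thesis using s by (simp add: power2_eq_square algebra_simps)
  qed
  have swap: "(\<Sum>i\<in>UNIV. \<Sum>j\<in>UNIV. M $ i $ j * (x $ j)^2) = (\<Sum>j\<in>UNIV. q j * (x $ j)^2)"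
    by (subst sum.swap) (simp add: q_def sum_distrib_right symm)
  have ident: "(\<Sum>i\<in>UNIV. V i) = qnorm2 (degvec M) x - qnorm2 (degvec M) (transmat M *v x)"
    unfolding qnorm2_def qinner_def qd Pd Vi sum_subtractf swap
    by (simp add: power2_eq_square mult.assoc)
  have row: "Max {(x $ i - x $ j)^2 | j. M $ i $ j > 0} \<le> 2 * V i" for i
  proof (rule Max.boundedI)
    show "finite {(x $ i - x $ j)^2 | j. M $ i $ j > 0}" by simp
    show "{(x $ i - x $ j)^2 | j. M $ i $ j > 0} \<noteq> {}" using diag[of i] by blast
    fix a assume "a \<in> {(x $ i - x $ j)^2 | j. M $ i $ j > 0}"
    then obtain j where a: "a = (x $ i - x $ j)^2" and mj: "M $ i $ j > 0" by blast
    have Vnn: "\<And>k. 0 \<le> M $ i $ k * (x $ k - y i)^2" using nonneg by simp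
    show "a \<le> 2 * V i"
    proof (cases "j = i")
      case True
      have "0 \<le> V i" unfolding V_def by (rule sum_nonneg) (use Vnn in auto)
      then show ?thesis using a True by simp
    next
      case False
      have "(\<Sum>k\<in>{i,j}. M $ i $ k * (x $ k - y i)^2) \<le> V i"
        unfolding V_def by (rule sum_mono2) (use Vnn in auto)
      hence h: "M $ i $ i * (x $ i - y i)^2 + M $ i $ j * (x $ j - y i)^2 \<le> V i"
        using False by simp
      have g1: "M $ i $ i \<ge> 1" using ge1 diag[of i] by (metis less_irrefl)
      have g2: "M $ i $ j \<ge> 1" using ge1 mj by (metis less_irrefl)
      have "(x $ i - y i)^2 \<le> M $ i $ i * (x $ i - y i)^2"
        using g1 by (simp add: mult_le_cancel_right1)
      moreover have "(x $ j - y i)^2 \<le> M $ i $ j * (x $ j - y i)^2"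
        using g2 by (simp add: mult_le_cancel_right1)
      moreover have "(x $ i - x $ j)^2 \<le> 2 * ((x $ i - y i)^2 + (x $ j - y i)^2)"
      proof -
        have e: "2 * ((x $ i - y i)^2 + (x $ j - y i)^2) - (x $ i - x $ j)^2 = (x $ i + x $ j - 2 * y i)^2"
          by (simp add: power2_eq_square algebra_simps)
        show ?thesis using e zero_le_power2[of "x $ i + x $ j - 2 * y i"] by linarith
      qed
      ultimately show ?thesis using a h by (smt (verit))
    qed
  qed
  have "(\<Sum>i\<in>UNIV. Max {(x $ i - x $ j)^2 | j. M $ i $ j > 0}) \<le> (\<Sum>i\<in>UNIV. 2 * V i)"
    by (rule sum_mono) (rule row)
  then show ?thesis using ident by (simp add: sum_distrib_left[symmetric])
qed

end
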